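(* Let $f,g:\mathbb{R}^n\to[0,+\infty)$ and $h_1,h_2:\mathbb{R}^n\to\mathbb{R}$, let $C\subseteq\mathbb{R}^n$ be closed and convex, $\Omega:=\{x:g(x)\neq0\}$, $C\cap\Omega\neq\emptyset$, and assume: $f$ is convex; $g$ is differentiable with locally Lipschitz gradient; $h_1$ is differentiable with locally Lipschitz gradient; $h_2$ is convex. Define $F:\mathbb{R}^n\to(-\infty,+\infty]$ by $F(x)=f^2(x)/g(x)+h_1(x)-h_2(x)$ if $x\in\Omega\cap C$ and $F(x)=+\infty$ otherwise. Suppose $S:=\{x\in\mathbb{R}^n:f(x)=g(x)=0\}\neq\emptyset$. If $x^0\in\mathrm{dom}F$ satisfies $$F(x^0)<\inf\Big\{\liminf_{z\to x}F(z):x\in S\Big\},$$ then the level set $\mathcal{X}_0:=\{x\in\mathrm{dom}F:F(x)\le F(x^0)\}$ is closed.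
   Context: $\mathrm{dom}F=\{x:F(x)<+\infty\}=\Omega\cap C$. *)

theory Defs
  imports "HOL-Analysis.Analysis"
begin

definition loc_lipschitz :: "('a::metric_space \<Rightarrow> 'b::metric_space) \<Rightarrow> bool" where
  "loc_lipschitz G \<longleftrightarrow>
     (\<forall>x. \<exists>e>0. \<exists>L. \<forall>y\<in>ball x e. \<forall>z\<in>ball x e. dist (G y) (G z) \<le> L * dist y z)"

definition diff_loc_lip_grad :: "('a::euclidean_space \<Rightarrow> real) \<Rightarrow> bool" where
  "diff_loc_lip_grad g \<longleftrightarrow>
     (\<exists>G. (\<forall>x. (g has_derivative (\<lambda>v. G x \<bullet> v)) (at x)) \<and> loc_lipschitz G)"

definition Ffun :: "('a \<Rightarrow> real) \<Rightarrow> ('a \<Rightarrow> real) \<Rightarrow> ('a \<Rightarrow> real) \<Rightarrow> ('a \<Rightarrow> real)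
                    \<Rightarrow> 'a set \<Rightarrow> 'a \<Rightarrow> ereal" where
  "Ffun f g h1 h2 C x =
     (if x \<in> {y. g y \<noteq> 0} \<inter> C then ereal ((f x)\<^sup>2 / g x + h1 x - h2 x) else \<infinity>)"

end

theory Submission
  imports Defs
begin

lemma dllg_cont: "diff_loc_lip_grad g \<Longrightarrow> continuous_on UNIV g"
  unfolding diff_loc_lip_grad_def
  by (metis has_derivative_continuous continuous_at_imp_continuous_on)

theorem proposition4p1:
  fixes f g h1 h2 :: "'a::euclidean_space \<Rightarrow> real" and C :: "'a set" and x0 :: 'a
  assumes f_nonneg: "\<And>x. f x \<ge> 0" and g_nonneg: "\<And>x. g x \<ge> 0"
    and C_closed: "closed C" and C_convex: "convex C"
    and C_Omega: "C \<inter> {x. g x \<noteq> 0} \<noteq> {}"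
    and f_convex: "convex_on UNIV f"
    and g_smooth: "diff_loc_lip_grad g"
    and h1_smooth: "diff_loc_lip_grad h1"
    and h2_convex: "convex_on UNIV h2"
    and S_ne: "{x. f x = 0 \<and> g x = 0} \<noteq> {}"
    and x0_dom: "Ffun f g h1 h2 C x0 < \<infinity>"
    and x0_below: "Ffun f g h1 h2 C x0 <
        (INF x\<in>{x. f x = 0 \<and> g x = 0}. Liminf (at x) (Ffun f g h1 h2 C))"
  shows "closed {x. Ffun f g h1 h2 C x < \<infinity> \<and> Ffun f g h1 h2 C x \<le> Ffun f g h1 h2 C x0}"
proof -
  define F where "F = Ffun f g h1 h2 C"
  define r where "r = (\<lambda>x. (f x)\<^sup>2 / g x + h1 x - h2 x)"
  define c where "c = r x0"
  have Fx0: "F x0 = ereal c" using x0_dom unfolding F_def Ffun_def c_def r_def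
    by (auto split: if_splits)
  have cf: "continuous_on UNIV f" by (rule convex_on_continuous[OF _ f_convex]) auto
  have ch2: "continuous_on UNIV h2" by (rule convex_on_continuous[OF _ h2_convex]) auto
  have cg: "continuous_on UNIV g" by (rule dllg_cont[OF g_smooth])
  have ch1: "continuous_on UNIV h1" by (rule dllg_cont[OF h1_smooth])
  have seteq: "{x. F x < \<infinity> \<and> F x \<le> F x0} = {x. x \<in> C \<and> g x \<noteq> 0 \<and> r x \<le> c}"
    unfolding Fx0 by (auto simp: F_def Ffun_def r_def)
  have tl: "\<And>u xs l. continuous_on UNIV u \<Longrightarrow> xs \<longlonglongrightarrow> l \<Longrightarrow> (\<lambda>n. u (xs n)) \<longlonglongrightarrow> u l"
    by (metis UNIV_I continuous_on_tendsto_compose eventually_sequentiallyI)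
  show ?thesis
    unfolding F_def[symmetric] seteq closed_sequential_limits
  proof (intro allI impI, elim conjE)
    fix xs l assume mem: "\<forall>n. xs n \<in> {x. x \<in> C \<and> g x \<noteq> 0 \<and> r x \<le> c}" and lim: "xs \<longlonglongrightarrow> l"
    have lC: "l \<in> C" using closed_sequentially[OF C_closed] mem lim by auto
    have tf: "(\<lambda>n. f (xs n)) \<longlonglongrightarrow> f l" and tg: "(\<lambda>n. g (xs n)) \<longlonglongrightarrow> g l"
      and th1: "(\<lambda>n. h1 (xs n)) \<longlonglongrightarrow> h1 l" and th2: "(\<lambda>n. h2 (xs n)) \<longlonglongrightarrow> h2 l"
      using tl[OF cf lim] tl[OF cg lim] tl[OF ch1 lim] tl[OF ch2 lim] by auto
    show "l \<in> {x. x \<in> C \<and> g x \<noteq> 0 \<and> r x \<le> c}"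
    proof (cases "g l = 0")
      case False
      have "(\<lambda>n. r (xs n)) \<longlonglongrightarrow> r l" unfolding r_def
        by (intro tendsto_intros tf tg th1 th2 False)
      then have "r l \<le> c" by (rule LIMSEQ_le_const2) (use mem in auto)
      then show ?thesis using lC False by auto
    next
      case True
      have le: "(f (xs n))\<^sup>2 \<le> g (xs n) * (c - h1 (xs n) + h2 (xs n))" for n
      proof -
        have gp: "g (xs n) > 0" using mem g_nonneg[of "xs n"] by (auto simp: less_le)
        have "(f (xs n))\<^sup>2 / g (xs n) \<le> c - h1 (xs n) + h2 (xs n)" using mem unfolding r_def by (smt (verit, del_insts) mem_Collect_eq)
        then have "(f (xs n))\<^sup>2 \<le> (c - h1 (xs n) + h2 (xs n)) * g (xs n)" using pos_divide_le_eq[OF gp] by blast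
        then show ?thesis by (metis mult.commute)
      qed
      have "(\<lambda>n. g (xs n) * (c - h1 (xs n) + h2 (xs n))) \<longlonglongrightarrow> g l * (c - h1 l + h2 l)"
        by (intro tendsto_intros tg th1 th2)
      moreover have "(\<lambda>n. (f (xs n))\<^sup>2) \<longlonglongrightarrow> (f l)\<^sup>2" by (intro tendsto_intros tf)
      ultimately have "(f l)\<^sup>2 \<le> g l * (c - h1 l + h2 l)" using le by (intro LIMSEQ_le) auto
      then have fl: "f l = 0" using True by simp
      have "(INF x\<in>{x. f x = 0 \<and> g x = 0}. Liminf (at x) F) \<le> Liminf (at l) F"
        by (rule INF_lower) (simp add: fl True)
      then have "F x0 < Liminf (at l) F"
        using x0_below unfolding F_def by (rule order_less_le_trans[rotated])
      then have ev: "eventually (\<lambda>z. F x0 < F z) (at l)"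
        by (rule le_Liminf_iff[THEN iffD1, OF order_refl, rule_format])
      have "filterlim xs (at l) sequentially"
        
      proof -
        have ne: "\<And>n. xs n \<noteq> l" using mem True by (metis (mono_tags, lifting) mem_Collect_eq)
        show ?thesis by (simp add: filterlim_at lim ne)
      qed
      from filterlim_iff[THEN iffD1, OF this, rule_format, OF ev]
      have "eventually (\<lambda>n. F x0 < F (xs n)) sequentially" .
      then obtain n where "F x0 < F (xs n)" by (meson eventually_sequentially order_refl)
      moreover have m: "xs n \<in> C" "g (xs n) \<noteq> 0" "r (xs n) \<le> c" using mem by auto
      moreover have "F (xs n) = ereal (r (xs n))" using m(1,2) by (simp add: F_def Ffun_def r_def)
      ultimately show ?thesis using Fx0 by simp
    qed
  qed
qed

end
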